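(* For all integers $N\ge1$ and $d\ge1$, $\mathcal{Q}_{N,1}^d\subseteq\mathcal{Q}_{N,1}^{N+1}$.
   Context: $\mathcal{Q}_{N,1}^d$ is the set of behaviors $(P(a|\mathbf{x}))_{a\in\{0,1\},\mathbf{x}\in\{0,1\}^N}$ of the form $P(a|\mathbf{x})=\mathrm{Tr}[\Pi_aU_{\mathbf{x}}\rho U_{\mathbf{x}}^\dagger]$, where $\rho$ is a density operator on $\mathbb{C}^N\otimes\mathbb{C}^d$ (independent of $\mathbf{x}$), $U_{\mathbf{x}}=\sum_{j=1}^N|j\rangle\langle j|\otimes U_j^{(x_j)}$ for arbitrary unitaries $U_j^{(0)},U_j^{(1)}$ on $\mathbb{C}^d$, $\{|j\rangle\}$ is the standard basis of $\mathbb{C}^N$, and $\{\Pi_0,\Pi_1\}$ is an arbitrary two-outcome POVM on $\mathbb{C}^N\otimes\mathbb{C}^d$. *)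

theory Defs
  imports "Jordan_Normal_Form.Matrix"
begin

text \<open>Complex matrices are Jordan_Normal_Form matrices of type complex mat.
  The space C^N (x) C^d is identified with C^(N*d) via |j> (x) |k>  ~  basis vector j*d+k
  (j < N, k < d).\<close>

definition cadj :: "complex mat \<Rightarrow> complex mat" where
  "cadj A = mat (dim_col A) (dim_row A) (\<lambda>(i,j). cnj (A $$ (j,i)))"

definition ctrace :: "complex mat \<Rightarrow> complex" where
  "ctrace A = (\<Sum>i<dim_row A. A $$ (i,i))"

definition psd_mat :: "nat \<Rightarrow> complex mat \<Rightarrow> bool" where
  "psd_mat n A \<longleftrightarrow> A \<in> carrier_mat n n \<and>
     (\<forall>v \<in> carrier_vec n. let z = (\<Sum>i<n. cnj (v $ i) * (A *\<^sub>v v) $ i) in Im z = 0 \<and> Re z \<ge> 0)"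

definition density_op :: "nat \<Rightarrow> complex mat \<Rightarrow> bool" where
  "density_op n \<rho> \<longleftrightarrow> psd_mat n \<rho> \<and> ctrace \<rho> = 1"

definition unitary_mat :: "nat \<Rightarrow> complex mat \<Rightarrow> bool" where
  "unitary_mat n U \<longleftrightarrow> U \<in> carrier_mat n n \<and> U * cadj U = 1\<^sub>m n \<and> cadj U * U = 1\<^sub>m n"

definition povm2 :: "nat \<Rightarrow> (bool \<Rightarrow> complex mat) \<Rightarrow> bool" where
  "povm2 n Pm \<longleftrightarrow> psd_mat n (Pm False) \<and> psd_mat n (Pm True) \<and> Pm False + Pm True = 1\<^sub>m n"

text \<open>U_x = sum_j |j><j| (x) U_j^(x_j), as an (N*d)x(N*d) block-diagonal matrix.
  U j b is U_j^(b) (b = False for 0, True for 1).\<close>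
definition ctrl_unitary :: "nat \<Rightarrow> nat \<Rightarrow> (nat \<Rightarrow> bool \<Rightarrow> complex mat) \<Rightarrow> (nat \<Rightarrow> bool) \<Rightarrow> complex mat" where
  "ctrl_unitary N d U x = mat (N*d) (N*d)
     (\<lambda>(r,c). if r div d = c div d then U (r div d) (x (r div d)) $$ (r mod d, c mod d) else 0)"

text \<open>Behaviours: a \<in> {0,1} encoded as bool, x \<in> {0,1}^N as nat \<Rightarrow> bool (only x 0..x (N-1) matter).\<close>
definition Q_set :: "nat \<Rightarrow> nat \<Rightarrow> (bool \<Rightarrow> (nat \<Rightarrow> bool) \<Rightarrow> complex) set" where
  "Q_set N d = {P. \<exists>\<rho> U Pm. density_op (N*d) \<rho> \<and>
       (\<forall>j<N. \<forall>b. unitary_mat d (U j b)) \<and> povm2 (N*d) Pm \<and>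
       (\<forall>a x. P a x = ctrace (Pm a * ctrl_unitary N d U x * \<rho> * cadj (ctrl_unitary N d U x)))}"

end

theory Submission
  imports Defs
begin


definition qf :: "nat \<Rightarrow> (nat \<Rightarrow> nat \<Rightarrow> complex) \<Rightarrow> (nat \<Rightarrow> complex) \<Rightarrow> complex" where
  "qf n A v = (\<Sum>i<n. \<Sum>j<n. cnj (v i) * A i j * v j)"

definition psdf :: "nat \<Rightarrow> (nat \<Rightarrow> nat \<Rightarrow> complex) \<Rightarrow> bool" where
  "psdf n A \<longleftrightarrow> (\<forall>v. Im (qf n A v) = 0 \<and> Re (qf n A v) \<ge> 0)"

lemma sum_two_pts:
  fixes f :: "nat \<Rightarrow> 'a::comm_ring_1"
  assumes "p < n" "q < n" "p \<noteq> q"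
  shows "(\<Sum>i<n. f i * (if i = p then x else if i = q then y else 0)) = f p * x + f q * y"
proof -
  have "(\<Sum>i<n. f i * (if i = p then x else if i = q then y else 0))
      = (\<Sum>i<n. (if i = p then f p * x else 0) + (if i = q then f q * y else 0))"
    by (rule sum.cong) (use assms in auto)
  also have "\<dots> = f p * x + f q * y" using assms by (simp add: sum.distrib)
  finally show ?thesis .
qed

lemma sum_two_pts':
  fixes f :: "nat \<Rightarrow> 'a::comm_ring_1"
  assumes "p < n" "q < n" "p \<noteq> q"
  shows "(\<Sum>i<n. (if i = p then x else if i = q then y else 0) * f i) = x * f p + y * f q"
  using sum_two_pts[OF assms, of f x y] by (simp add: mult.commute)

lemma qf_two:
  assumes "p < n" "q < n" "p \<noteq> q"
  shows "qf n A (\<lambda>i. if i = p then x else if i = q then y else 0)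
     = cnj x * (A p p * x + A p q * y) + cnj y * (A q p * x + A q q * y)"
proof -
  have "qf n A (\<lambda>i. if i = p then x else if i = q then y else 0) =
     (\<Sum>i<n. cnj (if i = p then x else if i = q then y else 0) * (\<Sum>j<n. A i j * (if j = p then x else if j = q then y else 0)))"
    unfolding qf_def by (simp add: sum_distrib_left mult.assoc)
  also have "\<dots> = (\<Sum>i<n. (if i = p then cnj x else if i = q then cnj y else 0) * (A i p * x + A i q * y))"
    by (rule sum.cong[OF refl]) (simp add: sum_two_pts[OF assms])
  also have "\<dots> = cnj x * (A p p * x + A p q * y) + cnj y * (A q p * x + A q q * y)"
    by (rule sum_two_pts'[OF assms])
  finally show ?thesis .
qed

lemma qf_one:
  assumes "p < n"
  shows "qf n A (\<lambda>i. if i = p then x else 0) = cnj x * A p p * x"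
proof -
  have "qf n A (\<lambda>i. if i = p then x else 0) = (\<Sum>i<n. (if i = p then cnj x * (\<Sum>j<n. A i j * (if j = p then x else 0)) else 0))"
    unfolding qf_def by (rule sum.cong[OF refl]) (auto simp: sum_distrib_left mult.assoc)
  also have "\<dots> = cnj x * (\<Sum>j<n. A p j * (if j = p then x else 0))" using assms by simp
  also have "(\<Sum>j<n. A p j * (if j = p then x else 0)) = A p p * x"
  proof -
    have "(\<Sum>j<n. A p j * (if j = p then x else 0)) = (\<Sum>j<n. if j = p then A p p * x else 0)"
      by (rule sum.cong) auto
    thus ?thesis using assms by simp
  qed
  finally show ?thesis by simp
qed

lemma psdf_diag: assumes "psdf n A" "p < n" shows "Im (A p p) = 0" "Re (A p p) \<ge> 0"
  using assms(1)[unfolded psdf_def, rule_format, of "\<lambda>i. if i = p then 1 else 0"]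
  by (auto simp: qf_one[OF assms(2)])

lemma psdf_herm: assumes "psdf n A" "p < n" "q < n" shows "A q p = cnj (A p q)"
proof (cases "p = q")
  case True thus ?thesis using psdf_diag[OF assms(1,2)] by (simp add: complex_eq_iff)
next
  case False
  have 1: "Im (A p p + A p q + A q p + A q q) = 0"
    using assms(1)[unfolded psdf_def, rule_format, of "\<lambda>i. if i = p then 1 else if i = q then 1 else 0"]
    by (simp add: qf_two[OF assms(2,3) False] algebra_simps)
  have 2: "Im (A p p + \<i> * A p q - \<i> * A q p + A q q) = 0"
    using assms(1)[unfolded psdf_def, rule_format, of "\<lambda>i. if i = p then 1 else if i = q then \<i> else 0"]
    by (simp add: qf_two[OF assms(2,3) False] algebra_simps)
  show ?thesis using 1 2 psdf_diag[OF assms(1,2)] psdf_diag[OF assms(1,3)]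
    by (simp add: complex_eq_iff)
qed

lemma psdf_zero_row: assumes "psdf n A" "m < n" "j < n" "A m m = 0" shows "A m j = 0"
proof (rule ccontr)
  assume a0: "A m j \<noteq> 0"
  hence jm: "j \<noteq> m" using assms(4) by auto
  define a where "a = A m j"
  define h where "h = Re (A j j)"
  define q where "q = cmod a ^ 2"
  have q0: "q > 0" using a0 unfolding q_def a_def by simp
  have h0: "h \<ge> 0" using psdf_diag[OF assms(1,3)] h_def by simp
  have Ajj: "A j j = of_real h" using psdf_diag[OF assms(1,3)] h_def by (simp add: complex_eq_iff)
  have Ajm: "A j m = cnj a" using psdf_herm[OF assms(1,2,3)] a_def by simp
  define x where "x = complex_of_real ((h+1)/q) * a"
  have aa: "cnj a * a = of_real q" unfolding q_def using complex_norm_square[of a] by (simp add: mult.commute)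
  have "qf n A (\<lambda>i. if i = m then x else if i = j then -1 else 0) = cnj x * (A m m * x + A m j * (-1)) + cnj (-1) * (A j m * x + A j j * (-1))"
    by (rule qf_two[OF assms(2,3) jm[symmetric]])
  also have "\<dots> = - 2 * (complex_of_real ((h+1)/q) * (cnj a * a)) + A j j"
    using assms(4) unfolding Ajm a_def[symmetric] x_def by (simp add: algebra_simps)
  also have "\<dots> = - 2 * complex_of_real (h+1) + of_real h" unfolding aa Ajj using q0
    by (simp add: of_real_mult[symmetric] del: of_real_mult)
  finally have "Re (qf n A (\<lambda>i. if i = m then x else if i = j then -1 else 0)) = - h - 2" by simp
  moreover have "Re (qf n A (\<lambda>i. if i = m then x else if i = j then -1 else 0)) \<ge> 0"
    using assms(1) unfolding psdf_def by blast
  ultimately show False using h0 by simp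
qed

lemma qf_cong_zero_row:
  assumes "\<And>j. j < n \<Longrightarrow> A m j = 0" "\<And>i. i < n \<Longrightarrow> A i m = 0"
  shows "qf n A (v(m := t)) = qf n A v"
  unfolding qf_def
  by (rule sum.cong[OF refl], rule sum.cong[OF refl]) (use assms in auto)

lemma qf_sub_rank1:
  "qf n (\<lambda>i j. A i j - g i * cnj (g j)) u = qf n A u - (\<Sum>i<n. cnj (u i) * g i) * cnj (\<Sum>i<n. cnj (u i) * g i)"
proof -
  have "(\<Sum>i<n. cnj (u i) * g i) * cnj (\<Sum>i<n. cnj (u i) * g i) = (\<Sum>i<n. \<Sum>j<n. cnj (u i) * (g i * cnj (g j)) * u j)"
    by (simp add: sum_product mult_ac)
  moreover have "qf n (\<lambda>i j. A i j - g i * cnj (g j)) u = qf n A u - (\<Sum>i<n. \<Sum>j<n. cnj (u i) * (g i * cnj (g j)) * u j)"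
    unfolding qf_def by (simp add: sum_subtractf right_diff_distrib left_diff_distrib)
  ultimately show ?thesis by simp
qed

lemma chol_aux:
  assumes "psdf n A" "m \<le> n" "\<And>i j. i < n \<Longrightarrow> j < n \<Longrightarrow> m \<le> i \<or> m \<le> j \<Longrightarrow> A i j = 0"
  shows "\<exists>w. \<forall>i<n. \<forall>j<n. A i j = (\<Sum>k<m. w k i * cnj (w k j))"
  using assms
proof (induction m arbitrary: A)
  case 0
  thus ?case by auto
next
  case (Suc m)
  have mn: "m < n" using Suc.prems by simp
  show ?case
  proof (cases "A m m = 0")
    case True
    have z: "A i j = 0" if "i < n" "j < n" "m \<le> i \<or> m \<le> j" for i j
    proof (cases "i = m \<or> j = m")
      case True
      show ?thesis
      proof (cases "i = m")
        case True thus ?thesis using psdf_zero_row[OF Suc.prems(1) mn that(2) \<open>A m m = 0\<close>] by simp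
      next
        case False
        hence "j = m" using \<open>i = m \<or> j = m\<close> by simp
        thus ?thesis using psdf_zero_row[OF Suc.prems(1) mn that(1) \<open>A m m = 0\<close>] psdf_herm[OF Suc.prems(1) mn that(1)] by simp
      qed
    next
      case False thus ?thesis using Suc.prems(3) that by auto
    qed
    obtain w where w: "\<forall>i<n. \<forall>j<n. A i j = (\<Sum>k<m. w k i * cnj (w k j))"
      using Suc.IH[OF Suc.prems(1) _ z] mn by auto
    show ?thesis
      by (rule exI[of _ "w(m := (\<lambda>_. 0))"]) (use w in auto)
  next
    case False
    define c where "c = Re (A m m)"
    have Amm: "A m m = of_real c" using psdf_diag[OF Suc.prems(1) mn] c_def by (simp add: complex_eq_iff)
    have c0: "c > 0"
    proof -
      have "c \<ge> 0" using psdf_diag[OF Suc.prems(1) mn] unfolding c_def by simp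
      moreover have "c \<noteq> 0" using False unfolding Amm by auto
      ultimately show ?thesis by simp
    qed
    define g where "g i = A i m / of_real (sqrt c)" for i
    define A' where "A' i j = A i j - g i * cnj (g j)" for i j
    have gg: "g i * cnj (g j) = A i m * A m j / of_real c" if "j < n" for i j
    proof -
      have "cnj (g j) = A m j / of_real (sqrt c)" unfolding g_def
        using psdf_herm[OF Suc.prems(1) mn that] by simp
      thus ?thesis unfolding g_def using c0
        by (simp add: field_simps of_real_mult[symmetric] del: of_real_mult)
    qed
    have A'z: "A' i j = 0" if ij: "i < n" "j < n" and mij: "m \<le> i \<or> m \<le> j" for i j
    proof -
      consider "i = m" | "j = m" | "Suc m \<le> i \<or> Suc m \<le> j" using mij by linarith
      thus ?thesis
      proof cases
        case 1 thus ?thesis unfolding A'_def using gg[OF ij(2)] Amm c0 by simp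
      next
        case 2 thus ?thesis unfolding A'_def using gg[OF ij(2)] Amm c0 by simp
      next
        case 3
        have "A i j = 0" using Suc.prems(3) ij 3 by auto
        moreover have "A i m = 0 \<or> A m j = 0" using Suc.prems(3) ij 3 mn by auto
        ultimately show ?thesis unfolding A'_def using gg[OF ij(2)] by auto
      qed
    qed
    have psd': "psdf n A'" unfolding psdf_def
    proof
      fix v
      define z where "z = (\<Sum>i<n. cnj (v i) * g i)"
      define t where "t = - cnj z / of_real (sqrt c)"
      define v' where "v' = v(m := v m + t)"
      have e1: "qf n A' v = qf n A' v'" unfolding v'_def
        by (rule qf_cong_zero_row[symmetric]) (use A'z mn in auto)
      have e2: "qf n A' v' = qf n A v' - (\<Sum>i<n. cnj (v' i) * g i) * cnj (\<Sum>i<n. cnj (v' i) * g i)"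
        unfolding A'_def by (rule qf_sub_rank1)
      have "(\<Sum>i<n. cnj (v' i) * g i) = (\<Sum>i<n. cnj (v i) * g i + (if i = m then cnj t * g m else 0))"
        unfolding v'_def by (rule sum.cong) (auto simp: distrib_right)
      also have "\<dots> = z + cnj t * g m" using mn by (simp add: sum.distrib z_def)
      also have "g m = of_real (sqrt c)"
      proof -
        have "c / sqrt c = sqrt c" using c0 by (simp add: real_div_sqrt)
        hence "of_real c / of_real (sqrt c) = (of_real (sqrt c) :: complex)" by (metis of_real_divide)
        thus ?thesis unfolding g_def Amm .
      qed
      also have "z + cnj t * of_real (sqrt c) = 0"
      proof -
        have "cnj t = - z / of_real (sqrt c)" unfolding t_def by simp
        thus ?thesis using c0 by simp
      qed
      finally have "qf n A' v = qf n A v'" using e1 e2 by simp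
      thus "Im (qf n A' v) = 0 \<and> 0 \<le> Re (qf n A' v)" using Suc.prems(1) unfolding psdf_def by simp
    qed
    obtain w where w: "\<forall>i<n. \<forall>j<n. A' i j = (\<Sum>k<m. w k i * cnj (w k j))"
      using Suc.IH[OF psd' _ A'z] mn by auto
    show ?thesis
    proof (rule exI[of _ "w(m := g)"], intro allI impI)
      fix i j assume ij: "i < n" "j < n"
      have "A i j = A' i j + g i * cnj (g j)" unfolding A'_def by simp
      also have "\<dots> = (\<Sum>k<Suc m. (w(m := g)) k i * cnj ((w(m := g)) k j))"
        using w ij by simp
      finally show "A i j = (\<Sum>k<Suc m. (w(m := g)) k i * cnj ((w(m := g)) k j))" .
    qed
  qed
qed

lemma chol:
  assumes "psdf n A"
  shows "\<exists>w. \<forall>i<n. \<forall>j<n. A i j = (\<Sum>k<n. w k i * cnj (w k j))"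
  by (rule chol_aux[OF assms order_refl]) auto


lemma sum_nd:
  fixes f :: "nat \<Rightarrow> 'a::comm_monoid_add"
  assumes "d > 0"
  shows "(\<Sum>r<N*d. f r) = (\<Sum>j<N. \<Sum>s<d. f (j*d+s))"
proof -
  have "(\<Sum>j<N. \<Sum>s<d. f (j*d+s)) = (\<Sum>(j,s)\<in>{..<N}\<times>{..<d}. f (j*d+s))"
    by (simp add: sum.cartesian_product)
  also have "\<dots> = (\<Sum>r<N*d. f r)"
  proof (rule sum.reindex_bij_witness[where i = "\<lambda>r. (r div d, r mod d)" and j = "\<lambda>(j,s). j*d+s"])
    fix a assume "a \<in> {..<N*d}" thus "(a div d, a mod d) \<in> {..<N} \<times> {..<d}"
      using assms by (auto simp: less_mult_imp_div_less)
  next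
    fix a assume "a \<in> {..<N} \<times> {..<d}"
    then obtain j s where a: "a = (j,s)" "j < N" "s < d" by auto
    have "j*d + s < (j+1)*d" using a by simp
    also have "\<dots> \<le> N*d" using a by (intro mult_right_mono) auto
    finally show "(case a of (j, s) \<Rightarrow> j * d + s) \<in> {..<N * d}" using a by simp
  qed (use assms in auto)
  finally show ?thesis by simp
qed

lemma jds_eq: fixes d :: nat assumes "s < d" "s' < d" shows "(j*d+s = j'*d+s') \<longleftrightarrow> (j = j' \<and> s = s')"
proof
  assume h: "j*d+s = j'*d+s'"
  have "j = j'" using arg_cong[OF h, of "\<lambda>r. r div d"] assms by simp
  thus "j = j' \<and> s = s'" using h by simp
qed auto

lemma mult_entry:
  assumes "A \<in> carrier_mat n m" "B \<in> carrier_mat m p" "i < n" "j < p"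
  shows "(A * B) $$ (i,j) = (\<Sum>l<m. A $$ (i,l) * B $$ (l,j))"
  using assms by (simp add: scalar_prod_def atLeast0LessThan)

lemma cadj_carrier: "A \<in> carrier_mat n m \<Longrightarrow> cadj A \<in> carrier_mat m n"
  unfolding cadj_def by auto

lemma cadj_entry: "A \<in> carrier_mat n m \<Longrightarrow> i < m \<Longrightarrow> j < n \<Longrightarrow> cadj A $$ (i,j) = cnj (A $$ (j,i))"
  unfolding cadj_def by auto

lemma psd_psdf: assumes "psd_mat n A" shows "psdf n (\<lambda>i j. A $$ (i,j))"
  unfolding psdf_def
proof
  fix v :: "nat \<Rightarrow> complex"
  have A: "A \<in> carrier_mat n n" using assms unfolding psd_mat_def by auto
  have "(\<Sum>i<n. cnj (vec n v $ i) * (A *\<^sub>v vec n v) $ i) = qf n (\<lambda>i j. A $$ (i,j)) v"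
    unfolding qf_def using A
    by (intro sum.cong refl) (auto simp: scalar_prod_def atLeast0LessThan sum_distrib_left mult_ac)
  moreover have "vec n v \<in> carrier_vec n" by simp
  ultimately show "Im (qf n (\<lambda>i j. A $$ (i, j)) v) = 0 \<and> 0 \<le> Re (qf n (\<lambda>i j. A $$ (i, j)) v)"
    using assms unfolding psd_mat_def Let_def by metis
qed

lemma trace_form:
  assumes PP: "PP \<in> carrier_mat n n" and V: "V \<in> carrier_mat n n" and R: "R \<in> carrier_mat n n"
    and Rw: "\<And>r r'. r < n \<Longrightarrow> r' < n \<Longrightarrow> R $$ (r,r') = (\<Sum>k\<in>KK. w k r * cnj (w k r'))"
    and fin: "finite KK"
  shows "ctrace (PP * V * R * cadj V) = (\<Sum>k\<in>KK. qf n (\<lambda>i j. PP $$ (i,j)) (\<lambda>r. \<Sum>c<n. V $$ (r,c) * w k c))"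
proof -
  have PV: "PP * V \<in> carrier_mat n n" using PP V by auto
  have PVR: "PP * V * R \<in> carrier_mat n n" using PV R by auto
  have cV: "cadj V \<in> carrier_mat n n" using cadj_carrier[OF V] .
  have "ctrace (PP * V * R * cadj V) = (\<Sum>i<n. (PP * V * R * cadj V) $$ (i,i))"
    unfolding ctrace_def using PP by simp
  also have "\<dots> = (\<Sum>i<n. \<Sum>m<n. \<Sum>l<n. \<Sum>a<n. \<Sum>k\<in>KK. PP $$ (i,a) * V $$ (a,l) * (w k l * cnj (w k m)) * cnj (V $$ (i,m)))"
  proof (intro sum.cong refl)
    fix i assume i: "i \<in> {..<n}"
    have e1: "(PP * V * R) $$ (i,m) = (\<Sum>l<n. (\<Sum>a<n. PP $$ (i,a) * V $$ (a,l)) * R $$ (l,m))" if "m < n" for m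
      using i that by (simp add: mult_entry[OF PV R] mult_entry[OF PP V])
    have "(PP * V * R * cadj V) $$ (i,i) = (\<Sum>m<n. (PP * V * R) $$ (i,m) * cadj V $$ (m,i))"
      using i by (simp add: mult_entry[OF PVR cV])
    also have "\<dots> = (\<Sum>m<n. \<Sum>l<n. \<Sum>a<n. \<Sum>k\<in>KK. PP $$ (i,a) * V $$ (a,l) * (w k l * cnj (w k m)) * cnj (V $$ (i,m)))"
      by (intro sum.cong refl) (use i in \<open>simp add: e1 cadj_entry[OF V] Rw sum_distrib_left sum_distrib_right mult_ac\<close>)
    finally show "(PP * V * R * cadj V) $$ (i,i) = (\<Sum>m<n. \<Sum>l<n. \<Sum>a<n. \<Sum>k\<in>KK. PP $$ (i,a) * V $$ (a,l) * (w k l * cnj (w k m)) * cnj (V $$ (i,m)))" .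
  qed
  also have "\<dots> = (\<Sum>k\<in>KK. \<Sum>i<n. \<Sum>a<n. \<Sum>m<n. \<Sum>l<n. cnj (V $$ (i,m)) * cnj (w k m) * PP $$ (i,a) * (V $$ (a,l) * w k l))"
    apply (simp add: sum.cartesian_product)
    apply (rule sum.reindex_bij_witness[where i = "\<lambda>(k,i,a,m,l). (i,m,l,a,k)" and j = "\<lambda>(i,m,l,a,k). (k,i,a,m,l)"])
    apply (auto simp: mult_ac)
    done
  also have "\<dots> = (\<Sum>k\<in>KK. qf n (\<lambda>i j. PP $$ (i,j)) (\<lambda>r. \<Sum>c<n. V $$ (r,c) * w k c))"
    unfolding qf_def by (simp add: sum_distrib_left sum_distrib_right mult_ac)
  finally show ?thesis .
qed

lemma ctrl_entry:
  assumes "j < N" "s < d"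
  shows "(\<Sum>c<N*d. ctrl_unitary N d U x $$ (j*d+s, c) * f c) = (\<Sum>t<d. U j (x j) $$ (s,t) * f (j*d+t))"
proof -
  have d: "d > 0" using assms by simp
  have lt: "j*d+s < N*d"
  proof -
    have "j*d + s < (j+1)*d" using assms by simp
    also have "\<dots> \<le> N*d" using assms by (intro mult_right_mono) auto
    finally show ?thesis .
  qed
  have lt2: "j'*d+t < N*d" if "j' < N" "t < d" for j' t
  proof -
    have "j'*d + t < (j'+1)*d" using that by simp
    also have "\<dots> \<le> N*d" using that by (intro mult_right_mono) auto
    finally show ?thesis .
  qed
  have "(\<Sum>c<N*d. ctrl_unitary N d U x $$ (j*d+s, c) * f c) = (\<Sum>j'<N. \<Sum>t<d. ctrl_unitary N d U x $$ (j*d+s, j'*d+t) * f (j'*d+t))"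
    by (rule sum_nd[OF d])
  also have "\<dots> = (\<Sum>j'<N. if j' = j then (\<Sum>t<d. U j (x j) $$ (s,t) * f (j*d+t)) else 0)"
    apply (intro sum.cong refl)
    using assms lt lt2 by (auto simp: ctrl_unitary_def)
  also have "\<dots> = (\<Sum>t<d. U j (x j) $$ (s,t) * f (j*d+t))" using assms by simp
  finally show ?thesis .
qed

lemma qf_nd:
  assumes "d > 0"
  shows "qf (N*d) A v = (\<Sum>j<N. \<Sum>s<d. \<Sum>j'<N. \<Sum>s'<d. cnj (v (j*d+s)) * A (j*d+s) (j'*d+s') * v (j'*d+s'))"
  unfolding qf_def by (simp add: sum_nd[OF assms])

lemma qf_rank1: "qf n (\<lambda>i j. g i * cnj (g j)) u = (\<Sum>i<n. cnj (u i) * g i) * cnj (\<Sum>i<n. cnj (u i) * g i)"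
  unfolding qf_def by (simp add: sum_product mult_ac)

lemma qf_add: "qf n (\<lambda>i j. A i j + B i j) u = qf n A u + qf n B u"
  unfolding qf_def by (simp add: distrib_left distrib_right sum.distrib)

lemma nonneg_sum:
  assumes "\<And>i. i \<in> A \<Longrightarrow> Im (f i) = 0 \<and> Re (f i) \<ge> 0"
  shows "Im (sum f A) = 0 \<and> Re (sum f A) \<ge> 0"
  using assms by (simp add: Im_sum Re_sum sum_nonneg)

lemma cnj_mult_self: "cnj z * z = complex_of_real ((cmod z)^2)"
  using complex_norm_square[of z] by (simp add: mult.commute)

lemma restrict2:
  fixes f :: "nat \<Rightarrow> 'a::comm_monoid_add"
  assumes "2 \<le> D" "\<And>c. 2 \<le> c \<Longrightarrow> f c = 0"
  shows "(\<Sum>c<D. f c) = (\<Sum>c<2. f c)"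
  by (rule sum.mono_neutral_right) (use assms in auto)

lemma unitary_norm:
  assumes "unitary_mat d V"
  shows "(\<Sum>s<d. cnj (\<Sum>t<d. V $$ (s,t) * f t) * (\<Sum>t<d. V $$ (s,t) * f t)) = (\<Sum>t<d. cnj (f t) * f t)"
proof -
  have V: "V \<in> carrier_mat d d" and VV: "cadj V * V = 1\<^sub>m d" using assms unfolding unitary_mat_def by auto
  have orth: "(\<Sum>s<d. cnj (V $$ (s,t)) * V $$ (s,t')) = (if t = t' then 1 else 0)" if "t < d" "t' < d" for t t'
  proof -
    have "(cadj V * V) $$ (t,t') = (\<Sum>s<d. cadj V $$ (t,s) * V $$ (s,t'))"
      by (rule mult_entry[OF cadj_carrier[OF V] V that])
    also have "\<dots> = (\<Sum>s<d. cnj (V $$ (s,t)) * V $$ (s,t'))"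
      by (intro sum.cong refl) (use that V in \<open>simp add: cadj_entry\<close>)
    finally show ?thesis using VV that by simp
  qed
  have "(\<Sum>s<d. cnj (\<Sum>t<d. V $$ (s,t) * f t) * (\<Sum>t<d. V $$ (s,t) * f t))
     = (\<Sum>s<d. \<Sum>t<d. \<Sum>t'<d. cnj (f t) * f t' * (cnj (V $$ (s,t)) * V $$ (s,t')))"
    by (simp add: sum_distrib_left sum_distrib_right mult_ac)
  also have "\<dots> = (\<Sum>t<d. \<Sum>t'<d. \<Sum>s<d. cnj (f t) * f t' * (cnj (V $$ (s,t)) * V $$ (s,t')))"
    apply (simp add: sum.cartesian_product)
    apply (rule sum.reindex_bij_witness[where i = "\<lambda>(t,t',s). (s,t,t')" and j = "\<lambda>(s,t,t'). (t,t',s)"])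
    apply auto
    done
  also have "\<dots> = (\<Sum>t<d. \<Sum>t'<d. cnj (f t) * f t' * (if t = t' then 1 else 0))"
    by (intro sum.cong refl) (simp add: sum_distrib_left[symmetric] orth)
  also have "\<dots> = (\<Sum>t<d. cnj (f t) * f t)"
    by (intro sum.cong refl) (simp add: if_distrib cong: if_cong)
  finally show ?thesis .
qed

lemma G:
  fixes a :: "nat \<Rightarrow> nat \<Rightarrow> complex" and e :: "nat \<Rightarrow> nat \<Rightarrow> nat \<Rightarrow> nat \<Rightarrow> complex"
    and M :: "nat \<Rightarrow> nat \<Rightarrow> nat \<Rightarrow> nat \<Rightarrow> complex"
  assumes fin: "finite KK" "finite J" "finite S" "finite C"
  shows "(\<Sum>k\<in>KK. \<Sum>j\<in>J. \<Sum>s\<in>S. \<Sum>j'\<in>J. \<Sum>s'\<in>S. cnj (\<Sum>c\<in>C. a j c * e j c s k) * M j s j' s' * (\<Sum>c'\<in>C. a j' c' * e j' c' s' k))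
   = (\<Sum>j\<in>J. \<Sum>c\<in>C. \<Sum>j'\<in>J. \<Sum>c'\<in>C. cnj (a j c) * (\<Sum>k\<in>KK. \<Sum>s\<in>S. \<Sum>s'\<in>S. cnj (e j c s k) * M j s j' s' * e j' c' s' k) * a j' c')"
proof -
  let ?X = "\<lambda>k j s j' s' c c'. cnj (a j c) * cnj (e j c s k) * M j s j' s' * a j' c' * e j' c' s' k"
  have L: "?thesis \<longleftrightarrow> (\<Sum>k\<in>KK. \<Sum>j\<in>J. \<Sum>s\<in>S. \<Sum>j'\<in>J. \<Sum>s'\<in>S. \<Sum>c\<in>C. \<Sum>c'\<in>C. ?X k j s j' s' c c')
     = (\<Sum>j\<in>J. \<Sum>c\<in>C. \<Sum>j'\<in>J. \<Sum>c'\<in>C. \<Sum>k\<in>KK. \<Sum>s\<in>S. \<Sum>s'\<in>S. ?X k j s j' s' c c')"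
    by (simp add: sum_distrib_left sum_distrib_right mult_ac)
  show ?thesis unfolding L
    apply (simp add: sum.cartesian_product)
    apply (rule sum.reindex_bij_witness[where i = "\<lambda>(j,c,j',c',k,s,s'). (k,j,s,j',s',c,c')" and j = "\<lambda>(k,j,s,j',s',c,c'). (j,c,j',c',k,s,s')"])
    apply auto
    done
qed


definition G2 :: "(nat \<Rightarrow> complex) \<Rightarrow> nat \<Rightarrow> nat \<Rightarrow> complex" where
  "G2 a c c' = (if c = 0 then (if c' = 0 then a 0 else - cnj (a 1)) else (if c' = 0 then a 1 else cnj (a 0)))"

lemma sum2: "(\<Sum>c<2. f c) = f 0 + f (1::nat)"
  by (simp add: numeral_2_eq_2)

lemma less2_cases: "(c::nat) < 2 \<Longrightarrow> c = 0 \<or> c = 1" by auto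

lemma G2_unit:
  assumes "a 0 * cnj (a 0) + a 1 * cnj (a 1) = 1" "c < 2" "c' < 2"
  shows "(\<Sum>e<2. G2 a c e * cnj (G2 a c' e)) = (if c = c' then 1 else 0)"
    "(\<Sum>e<2. cnj (G2 a e c) * G2 a e c') = (if c = c' then 1 else 0)"
  using less2_cases[OF assms(2)] less2_cases[OF assms(3)] assms(1)
  by (auto simp: sum2 G2_def algebra_simps)

lemma block_unitary:
  assumes D: "2 \<le> D"
    and r: "\<And>c c'. c < 2 \<Longrightarrow> c' < 2 \<Longrightarrow> (\<Sum>e<2. g c e * cnj (g c' e)) = (if c = c' then 1 else 0)"
    and l: "\<And>c c'. c < 2 \<Longrightarrow> c' < 2 \<Longrightarrow> (\<Sum>e<2. cnj (g e c) * g e c') = (if c = c' then 1 else 0)"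
  shows "unitary_mat D (mat D D (\<lambda>(c,c'). if c < 2 \<and> c' < 2 then g c c' else if c = c' then 1 else 0))"
    (is "unitary_mat D ?M")
proof -
  let ?m = "\<lambda>c c'. if c < 2 \<and> c' < 2 then g c c' else if c = c' then (1::complex) else 0"
  have M: "?M \<in> carrier_mat D D" by simp
  have ent: "?M $$ (c,c') = ?m c c'" if "c < D" "c' < D" for c c' using that by simp
  have cM: "cadj ?M \<in> carrier_mat D D" by (rule cadj_carrier[OF M])
  have A: "?M * cadj ?M = 1\<^sub>m D"
  proof (rule eq_matI)
    fix c c' assume cc: "c < dim_row (1\<^sub>m D)" "c' < dim_col (1\<^sub>m D)"
    hence cc: "c < D" "c' < D" by auto
    have "(?M * cadj ?M) $$ (c,c') = (\<Sum>e<D. ?m c e * cnj (?m c' e))"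
      using cc by (simp add: mult_entry[OF M cM] cadj_entry[OF M])
    also have "\<dots> = (if c = c' then 1 else 0)"
    proof (cases "c < 2 \<and> c' < 2")
      case True
      have "(\<Sum>e<D. ?m c e * cnj (?m c' e)) = (\<Sum>e<2. ?m c e * cnj (?m c' e))"
        by (rule restrict2[OF D]) (use True in auto)
      also have "\<dots> = (\<Sum>e<2. g c e * cnj (g c' e))" using True by (intro sum.cong) auto
      finally show ?thesis using r True by simp
    next
      case False
      show ?thesis
      proof (cases "c < 2")
        case True
        hence c': "\<not> c' < 2" using False by simp
        have "(\<Sum>e<D. ?m c e * cnj (?m c' e)) = (\<Sum>e<D. if e = c' then ?m c e else 0)"
          by (intro sum.cong) (use c' in auto)
        thus ?thesis using cc c' True by simp
      next
        case False
        have "(\<Sum>e<D. ?m c e * cnj (?m c' e)) = (\<Sum>e<D. if e = c then cnj (?m c' e) else 0)"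
          by (intro sum.cong) (use False in auto)
        thus ?thesis using cc False by auto
      qed
    qed
    finally show "(?M * cadj ?M) $$ (c,c') = 1\<^sub>m D $$ (c,c')" using cc by simp
  qed (use cM M in auto)
  have B: "cadj ?M * ?M = 1\<^sub>m D"
  proof (rule eq_matI)
    fix c c' assume cc: "c < dim_row (1\<^sub>m D)" "c' < dim_col (1\<^sub>m D)"
    hence cc: "c < D" "c' < D" by auto
    have "(cadj ?M * ?M) $$ (c,c') = (\<Sum>e<D. cnj (?m e c) * ?m e c')"
      using cc by (simp add: mult_entry[OF cM M] cadj_entry[OF M])
    also have "\<dots> = (if c = c' then 1 else 0)"
    proof (cases "c < 2 \<and> c' < 2")
      case True
      have "(\<Sum>e<D. cnj (?m e c) * ?m e c') = (\<Sum>e<2. cnj (?m e c) * ?m e c')"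
        by (rule restrict2[OF D]) (use True in auto)
      also have "\<dots> = (\<Sum>e<2. cnj (g e c) * g e c')" using True by (intro sum.cong) auto
      finally show ?thesis using l True by simp
    next
      case False
      show ?thesis
      proof (cases "c < 2")
        case True
        hence c': "\<not> c' < 2" using False by simp
        have "(\<Sum>e<D. cnj (?m e c) * ?m e c') = (\<Sum>e<D. if e = c' then cnj (?m e c) else 0)"
          by (intro sum.cong) (use c' in auto)
        thus ?thesis using cc c' True by simp
      next
        case False
        have "(\<Sum>e<D. cnj (?m e c) * ?m e c') = (\<Sum>e<D. if e = c then ?m e c' else 0)"
          by (intro sum.cong) (use False in auto)
        thus ?thesis using cc False by auto
      qed
    qed
    finally show "(cadj ?M * ?M) $$ (c,c') = 1\<^sub>m D $$ (c,c')" using cc by simp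
  qed (use cM M in auto)
  show ?thesis unfolding unitary_mat_def using M A B by simp
qed

lemma jd_div: "(s::nat) < d \<Longrightarrow> (j*d+s) div d = j" by simp
lemma jd_mod: "(s::nat) < d \<Longrightarrow> (j*d+s) mod d = s" by simp
lemma jd_lt: assumes "j < N" "(s::nat) < d" shows "j*d+s < N*d"
proof -
  have "j*d + s < (j+1)*d" using assms by simp
  also have "\<dots> \<le> N*d" using assms by (intro mult_right_mono) auto
  finally show ?thesis .
qed

lemma qf_cong: "(\<And>i j. i < n \<Longrightarrow> j < n \<Longrightarrow> A i j = B i j) \<Longrightarrow> qf n A v = qf n B v"
  unfolding qf_def by (intro sum.cong refl) auto


locale sim =
  fixes N d :: nat and rho :: "complex mat" and U :: "nat \<Rightarrow> bool \<Rightarrow> complex mat"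
    and Pm :: "bool \<Rightarrow> complex mat" and w :: "nat \<Rightarrow> nat \<Rightarrow> complex"
  assumes N1: "N \<ge> 1" and d1: "d \<ge> 1" and dens: "density_op (N*d) rho"
    and unit: "\<forall>j<N. \<forall>b. unitary_mat d (U j b)" and povm: "povm2 (N*d) Pm"
    and wfac: "\<forall>i<N*d. \<forall>j<N*d. rho $$ (i,j) = (\<Sum>k<N*d+2. w k i * cnj (w k j))"
    and wz: "\<forall>k i. N*d \<le> k \<longrightarrow> w k i = 0"
begin

definition Kd :: nat where "Kd = N*d+2"

lemma Kd: "N*d < Kd" "N*d+1 < Kd" unfolding Kd_def by auto

definition Psi :: "nat \<Rightarrow> bool \<Rightarrow> nat \<Rightarrow> nat \<Rightarrow> complex" where
  "Psi j b s k = (\<Sum>t<d. U j b $$ (s,t) * w k (j*d+t))"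

definition ipQ :: "(nat \<Rightarrow> nat \<Rightarrow> complex) \<Rightarrow> (nat \<Rightarrow> nat \<Rightarrow> complex) \<Rightarrow> complex" where
  "ipQ u v = (\<Sum>k<Kd. \<Sum>s<d. cnj (u s k) * v s k)"

definition nrm :: "(nat \<Rightarrow> nat \<Rightarrow> complex) \<Rightarrow> (nat \<Rightarrow> nat \<Rightarrow> complex) \<Rightarrow> (nat \<Rightarrow> nat \<Rightarrow> complex)" where
  "nrm u fb = (if ipQ u u = 0 then fb else (\<lambda>s k. complex_of_real (1 / sqrt (Re (ipQ u u))) * u s k))"

definition ind :: "nat \<Rightarrow> nat \<Rightarrow> nat \<Rightarrow> nat \<Rightarrow> complex" where
  "ind s0 k0 = (\<lambda>s k. if s = s0 \<and> k = k0 then 1 else 0)"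

definition e1 :: "nat \<Rightarrow> nat \<Rightarrow> nat \<Rightarrow> complex" where "e1 j = nrm (Psi j False) (ind 0 (N*d+1))"
definition vp :: "nat \<Rightarrow> nat \<Rightarrow> nat \<Rightarrow> complex" where "vp j = (\<lambda>s k. Psi j True s k - ipQ (e1 j) (Psi j True) * e1 j s k)"
definition e2 :: "nat \<Rightarrow> nat \<Rightarrow> nat \<Rightarrow> complex" where "e2 j = nrm (vp j) (ind 0 (N*d))"
definition E :: "nat \<Rightarrow> nat \<Rightarrow> nat \<Rightarrow> nat \<Rightarrow> complex" where "E j c = (if c = 0 then e1 j else e2 j)"
definition al :: "nat \<Rightarrow> bool \<Rightarrow> nat \<Rightarrow> complex" where "al j b c = ipQ (E j c) (Psi j b)"
definition rr :: "nat \<Rightarrow> real" where "rr j = sqrt (Re (ipQ (Psi j False) (Psi j False)))"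

lemma ipQ_self: "ipQ u u = complex_of_real (\<Sum>k<Kd. \<Sum>s<d. (cmod (u s k))^2)"
  unfolding ipQ_def by (simp add: cnj_mult_self)

lemma ipQ_self_re: "Re (ipQ u u) \<ge> 0" "ipQ u u = complex_of_real (Re (ipQ u u))"
  unfolding ipQ_self by (auto intro!: sum_nonneg)

lemma ipQ_zero: assumes "ipQ u u = 0" "s < d" "k < Kd" shows "u s k = 0"
proof -
  have "complex_of_real (\<Sum>k<Kd. \<Sum>s<d. (cmod (u s k))^2) = 0" using assms(1) unfolding ipQ_self .
  hence "(\<Sum>k<Kd. \<Sum>s<d. (cmod (u s k))^2) = 0" by (simp only: of_real_eq_0_iff)
  hence "\<forall>k\<in>{..<Kd}. (\<Sum>s<d. (cmod (u s k))^2) = 0"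
    by (subst (asm) sum_nonneg_eq_0_iff) (auto intro!: sum_nonneg)
  hence "(\<Sum>s<d. (cmod (u s k))^2) = 0" using assms by auto
  hence "\<forall>s\<in>{..<d}. (cmod (u s k))^2 = 0" by (subst (asm) sum_nonneg_eq_0_iff) auto
  thus ?thesis using assms by auto
qed

lemma ipQ_cnj: "ipQ v u = cnj (ipQ u v)"
  unfolding ipQ_def by (simp add: mult.commute)

lemma ipQ_lin: "ipQ x (\<lambda>s k. a * y s k + b * z s k) = a * ipQ x y + b * ipQ x z"
  unfolding ipQ_def by (simp add: sum.distrib sum_distrib_left algebra_simps)

lemma ipQ_smult_r: "ipQ x (\<lambda>s k. a * y s k) = a * ipQ x y"
  unfolding ipQ_def by (simp add: sum_distrib_left algebra_simps)

lemma ipQ_smult_l: "ipQ (\<lambda>s k. a * y s k) x = cnj a * ipQ y x"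
  unfolding ipQ_def by (simp add: sum_distrib_left algebra_simps)

lemma ipQ_cong_r: "(\<And>s k. s < d \<Longrightarrow> k < Kd \<Longrightarrow> y s k = y' s k) \<Longrightarrow> ipQ x y = ipQ x y'"
  unfolding ipQ_def by (intro sum.cong refl) auto

lemma ipQ_zero_r: "(\<And>s k. s < d \<Longrightarrow> k < Kd \<Longrightarrow> y s k = 0) \<Longrightarrow> ipQ x y = 0"
  unfolding ipQ_def by (simp)

lemma ipQ_ind: assumes "s0 < d" "k0 < Kd" shows "ipQ (ind s0 k0) v = v s0 k0"
proof -
  have "ipQ (ind s0 k0) v = (\<Sum>k<Kd. \<Sum>s<d. if k = k0 then (if s = s0 then v s k else 0) else 0)"
    unfolding ipQ_def ind_def by (intro sum.cong refl) auto
  also have "\<dots> = (\<Sum>k<Kd. if k = k0 then v s0 k else 0)"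
    by (intro sum.cong refl) (use assms in auto)
  finally show ?thesis using assms by simp
qed

lemma nrm_norm: assumes "ipQ u u \<noteq> 0" shows "ipQ (nrm u fb) (nrm u fb) = 1"
proof -
  define r where "r = Re (ipQ u u)"
  have r: "ipQ u u = of_real r" "r > 0" using ipQ_self_re[of u] assms unfolding r_def
    by (auto simp: order_le_less)
  have "ipQ (nrm u fb) (nrm u fb) = cnj (complex_of_real (1 / sqrt r)) * (complex_of_real (1 / sqrt r) * ipQ u u)"
    unfolding nrm_def r_def[symmetric] by (simp only: assms if_False ipQ_smult_l ipQ_smult_r)
  also have "\<dots> = of_real (1 / sqrt r * (1 / sqrt r * r))"
    unfolding r(1) complex_cnj_complex_of_real of_real_mult ..
  also have "1 / sqrt r * (1 / sqrt r * r) = 1" using r(2) by (simp add: field_simps)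
  finally show ?thesis by simp
qed

lemma nrm_eq: assumes "ipQ u u \<noteq> 0" shows "u = (\<lambda>s k. complex_of_real (sqrt (Re (ipQ u u))) * nrm u fb s k)"
proof -
  have "Re (ipQ u u) > 0" using ipQ_self_re[of u] assms by (metis order_le_less of_real_0)
  thus ?thesis unfolding nrm_def using assms by (auto simp: fun_eq_iff)
qed

lemma nrm_fb: "ipQ u u = 0 \<Longrightarrow> nrm u fb = fb" unfolding nrm_def by simp

lemma Psi_pad: "N*d \<le> k \<Longrightarrow> Psi j b s k = 0"
  unfolding Psi_def using wz by simp

lemma ipQ_Psi: assumes "j < N"
  shows "ipQ (Psi j b) (Psi j b) = (\<Sum>k<Kd. \<Sum>t<d. cnj (w k (j*d+t)) * w k (j*d+t))"
  unfolding ipQ_def Psi_def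
  by (intro sum.cong refl unitary_norm) (use unit assms in auto)

lemma ipQ_Psi_eq: "j < N \<Longrightarrow> ipQ (Psi j b) (Psi j b) = ipQ (Psi j False) (Psi j False)"
  using ipQ_Psi by simp

lemma ind_norm: "s0 < d \<Longrightarrow> k0 < Kd \<Longrightarrow> ipQ (ind s0 k0) (ind s0 k0) = 1"
  using ipQ_ind[of s0 k0 "ind s0 k0"] by (simp add: ind_def)

lemma d0: "0 < d" using d1 by simp

lemma e1_norm: "ipQ (e1 j) (e1 j) = 1"
  unfolding e1_def using nrm_norm nrm_fb ind_norm[OF d0] Kd by (cases "ipQ (Psi j False) (Psi j False) = 0") auto

lemma e2_norm: "ipQ (e2 j) (e2 j) = 1"
  unfolding e2_def using nrm_norm nrm_fb ind_norm[OF d0] Kd by (cases "ipQ (vp j) (vp j) = 0") auto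

lemma e1_pad: "e1 j 0 (N*d) = 0"
  unfolding e1_def nrm_def ind_def by (auto simp: Psi_pad)

lemma e12_orth: "ipQ (e1 j) (e2 j) = 0"
proof (cases "ipQ (vp j) (vp j) = 0")
  case True
  hence "e2 j = ind 0 (N*d)" unfolding e2_def by (simp add: nrm_fb)
  hence "ipQ (e1 j) (e2 j) = cnj (e1 j 0 (N*d))" using ipQ_cnj[of "e1 j" "ind 0 (N*d)"] ipQ_ind[OF d0] Kd by simp
  thus ?thesis using e1_pad by simp
next
  case False
  have "ipQ (e1 j) (vp j) = 0" unfolding vp_def
    using ipQ_lin[of "e1 j" 1 "Psi j True" "- ipQ (e1 j) (Psi j True)" "e1 j"] e1_norm by simp
  moreover have "e2 j = (\<lambda>s k. complex_of_real (1 / sqrt (Re (ipQ (vp j) (vp j)))) * vp j s k)"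
    unfolding e2_def nrm_def using False by (simp only: if_False)
  ultimately show ?thesis by (simp only: ipQ_smult_r mult_zero_right)
qed

lemma E_orth: "c < 2 \<Longrightarrow> c' < 2 \<Longrightarrow> ipQ (E j c) (E j c') = (if c = c' then 1 else 0)"
  using e1_norm e2_norm e12_orth ipQ_cnj[of "e2 j" "e1 j"]
  by (auto simp: E_def dest!: less2_cases)

lemma span_F: assumes "s < d" "k < Kd"
  shows "Psi j False s k = al j False 0 * e1 j s k + al j False 1 * e2 j s k"
proof (cases "ipQ (Psi j False) (Psi j False) = 0")
  case True
  have z: "Psi j False s k = 0" if "s < d" "k < Kd" for s k using ipQ_zero[OF True that] .
  have al0: "al j False c = 0" for c unfolding al_def by (rule ipQ_zero_r) (use z in auto)
  show ?thesis using z[OF assms] by (simp add: al0)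
next
  case False
  define nu where "nu = complex_of_real (sqrt (Re (ipQ (Psi j False) (Psi j False))))"
  have eq: "Psi j False = (\<lambda>s k. nu * e1 j s k)" unfolding nu_def e1_def by (rule nrm_eq[OF False])
  have "al j False 0 = nu" unfolding al_def E_def by (subst eq) (simp add: ipQ_smult_r e1_norm)
  moreover have "al j False 1 = 0" unfolding al_def E_def
    by (subst eq) (simp add: ipQ_smult_r ipQ_cnj[of "e2 j" "e1 j"] e12_orth)
  ultimately show ?thesis by (subst eq) simp
qed

lemma span_T: assumes "s < d" "k < Kd"
  shows "Psi j True s k = al j True 0 * e1 j s k + al j True 1 * e2 j s k"
proof -
  define beta where "beta = ipQ (e1 j) (Psi j True)"
  have dec: "Psi j True = (\<lambda>s k. beta * e1 j s k + 1 * vp j s k)" unfolding vp_def beta_def by auto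
  have a0: "al j True 0 = beta" unfolding al_def E_def beta_def by simp
  show ?thesis
  proof (cases "ipQ (vp j) (vp j) = 0")
    case True
    have z: "vp j s k = 0" if "s < d" "k < Kd" for s k using ipQ_zero[OF True that] .
    have "al j True 1 = beta * ipQ (e2 j) (e1 j) + 1 * ipQ (e2 j) (vp j)" unfolding al_def E_def
      by (subst dec) (simp only: ipQ_lin one_neq_zero if_False)
    also have "ipQ (e2 j) (vp j) = 0" by (rule ipQ_zero_r) (use z in auto)
    finally have "al j True 1 = 0" using ipQ_cnj[of "e2 j" "e1 j"] e12_orth by simp
    thus ?thesis using a0 z[OF assms] by (subst dec) simp
  next
    case False
    define nu where "nu = complex_of_real (sqrt (Re (ipQ (vp j) (vp j))))"
    have eq: "vp j = (\<lambda>s k. nu * e2 j s k)" unfolding nu_def e2_def by (rule nrm_eq[OF False])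
    have "al j True 1 = beta * ipQ (e2 j) (e1 j) + 1 * ipQ (e2 j) (vp j)" unfolding al_def E_def
      by (subst dec) (simp only: ipQ_lin one_neq_zero if_False)
    also have "ipQ (e2 j) (vp j) = nu" by (subst eq) (simp add: ipQ_smult_r e2_norm)
    finally have "al j True 1 = nu" using ipQ_cnj[of "e2 j" "e1 j"] e12_orth by simp
    thus ?thesis using a0 by (subst dec) (simp add: eq)
  qed
qed

lemma span: "s < d \<Longrightarrow> k < Kd \<Longrightarrow> Psi j b s k = (\<Sum>c<2. al j b c * E j c s k)"
  by (cases b) (simp_all add: sum2 E_def span_F span_T)

lemma parseval: "(\<Sum>c<2. al j b c * cnj (al j b c)) = ipQ (Psi j b) (Psi j b)"
proof -
  have "ipQ (Psi j b) (Psi j b) = ipQ (Psi j b) (\<lambda>s k. al j b 0 * E j 0 s k + al j b 1 * E j 1 s k)"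
    by (rule ipQ_cong_r) (subst span, assumption, assumption, simp only: sum2)
  also have "\<dots> = al j b 0 * ipQ (Psi j b) (E j 0) + al j b 1 * ipQ (Psi j b) (E j 1)" by (rule ipQ_lin)
  also have "\<dots> = (\<Sum>c<2. al j b c * cnj (al j b c))"
    unfolding sum2 al_def using ipQ_cnj[of "Psi j b" "E j 0"] ipQ_cnj[of "Psi j b" "E j 1"] by simp
  finally show ?thesis by simp
qed

end


lemma psdf_psd: assumes "A \<in> carrier_mat n n" "psdf n (\<lambda>i j. A $$ (i,j))" shows "psd_mat n A"
  unfolding psd_mat_def
proof (intro conjI assms(1) ballI)
  fix v :: "complex vec" assume v: "v \<in> carrier_vec n"
  have "(\<Sum>i<n. cnj (v $ i) * (A *\<^sub>v v) $ i) = qf n (\<lambda>i j. A $$ (i,j)) (\<lambda>i. v $ i)"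
    unfolding qf_def using assms(1) v
    by (intro sum.cong refl) (auto simp: scalar_prod_def atLeast0LessThan sum_distrib_left mult_ac)
  thus "let z = \<Sum>i<n. cnj (v $ i) * (A *\<^sub>v v) $ i in Im z = 0 \<and> 0 \<le> Re z"
    using assms(2) unfolding psdf_def Let_def by simp
qed

lemma restrict_2x:
  fixes f :: "nat \<Rightarrow> nat \<Rightarrow> nat \<Rightarrow> nat \<Rightarrow> complex"
  assumes "2 \<le> D"
  shows "(\<Sum>j<N. \<Sum>c<D. \<Sum>j'<N. \<Sum>c'<D. if c < 2 \<and> c' < 2 then f j c j' c' else 0)
       = (\<Sum>j<N. \<Sum>c<2. \<Sum>j'<N. \<Sum>c'<2. f j c j' c')"
proof (rule sum.cong[OF refl])
  fix j
  have "(\<Sum>c<D. \<Sum>j'<N. \<Sum>c'<D. if c < 2 \<and> c' < 2 then f j c j' c' else 0)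
      = (\<Sum>c<2. \<Sum>j'<N. \<Sum>c'<D. if c < 2 \<and> c' < 2 then f j c j' c' else 0)"
    by (rule restrict2[OF assms]) auto
  also have "\<dots> = (\<Sum>c<2. \<Sum>j'<N. \<Sum>c'<2. f j c j' c')"
  proof (rule sum.cong[OF refl], rule sum.cong[OF refl])
    fix c j' :: nat assume c: "c \<in> {..<2}"
    have "(\<Sum>c'<D. if c < 2 \<and> c' < 2 then f j c j' c' else 0) = (\<Sum>c'<2. if c < 2 \<and> c' < 2 then f j c j' c' else 0)"
      by (rule restrict2[OF assms]) auto
    thus "(\<Sum>c'<D. if c < 2 \<and> c' < 2 then f j c j' c' else 0) = (\<Sum>c'<2. f j c j' c')" using c by simp
  qed
  finally show "(\<Sum>c<D. \<Sum>j'<N. \<Sum>c'<D. if c < 2 \<and> c' < 2 then f j c j' c' else 0) = (\<Sum>c<2. \<Sum>j'<N. \<Sum>c'<2. f j c j' c')" .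
qed

context sim begin

definition Dp :: nat where "Dp = N+1"

lemma Dp: "2 \<le> Dp" "0 < Dp" unfolding Dp_def using N1 by auto

definition an :: "nat \<Rightarrow> bool \<Rightarrow> nat \<Rightarrow> complex" where
  "an j b c = (if rr j = 0 then (if c = 0 then 1 else 0) else al j b c / complex_of_real (rr j))"

definition U' :: "nat \<Rightarrow> bool \<Rightarrow> complex mat" where
  "U' j b = mat Dp Dp (\<lambda>(c,c'). if c < 2 \<and> c' < 2 then G2 (an j b) c c' else if c = c' then 1 else 0)"

definition phi :: "nat \<Rightarrow> complex" where
  "phi p = (if p mod Dp = 0 then complex_of_real (rr (p div Dp)) else 0)"

definition rho' :: "complex mat" where
  "rho' = mat (N*Dp) (N*Dp) (\<lambda>(p,q). phi p * cnj (phi q))"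

definition PiF :: "bool \<Rightarrow> nat \<Rightarrow> nat \<Rightarrow> nat \<Rightarrow> nat \<Rightarrow> complex" where
  "PiF a j c j' c' = (\<Sum>k<Kd. \<Sum>s<d. \<Sum>s'<d. cnj (E j c s k) * Pm a $$ (j*d+s, j'*d+s') * E j' c' s' k)"

definition Pi' :: "bool \<Rightarrow> complex mat" where
  "Pi' a = mat (N*Dp) (N*Dp) (\<lambda>(p,q). if p mod Dp < 2 \<and> q mod Dp < 2
      then PiF a (p div Dp) (p mod Dp) (q div Dp) (q mod Dp) else if \<not> a \<and> p = q then 1 else 0)"

lemma rr_sq: "complex_of_real (rr j * rr j) = ipQ (Psi j False) (Psi j False)"
proof -
  have "rr j * rr j = Re (ipQ (Psi j False) (Psi j False))" unfolding rr_def using ipQ_self_re(1) by simp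
  thus ?thesis using ipQ_self_re(2) by simp
qed

lemma al_zero: assumes "j < N" "rr j = 0" shows "al j b c = 0"
proof -
  have "ipQ (Psi j False) (Psi j False) = 0" using rr_sq[of j] assms(2) by simp
  hence "ipQ (Psi j b) (Psi j b) = 0" using ipQ_Psi_eq[OF assms(1)] by simp
  hence "Psi j b s k = 0" if "s < d" "k < Kd" for s k using ipQ_zero that by blast
  thus ?thesis unfolding al_def by (intro ipQ_zero_r) auto
qed

lemma an_norm: assumes "j < N" shows "an j b 0 * cnj (an j b 0) + an j b 1 * cnj (an j b 1) = 1"
proof (cases "rr j = 0")
  case True thus ?thesis unfolding an_def by simp
next
  case False
  have "an j b 0 * cnj (an j b 0) + an j b 1 * cnj (an j b 1)
      = (al j b 0 * cnj (al j b 0) + al j b 1 * cnj (al j b 1)) / complex_of_real (rr j * rr j)"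
    unfolding an_def using False by (simp add: field_simps)
  also have "al j b 0 * cnj (al j b 0) + al j b 1 * cnj (al j b 1) = ipQ (Psi j b) (Psi j b)"
    using parseval[of j b] by (simp add: sum2)
  also have "\<dots> = complex_of_real (rr j * rr j)" using ipQ_Psi_eq[OF assms] rr_sq by simp
  finally show ?thesis using False by simp
qed

lemma U'_unit: assumes "j < N" shows "unitary_mat Dp (U' j b)"
  unfolding U'_def
  by (rule block_unitary) (use Dp G2_unit[OF an_norm[OF assms, of b]] in auto)

lemma phi_at: assumes "t < Dp" shows "phi (j*Dp+t) = (if t = 0 then complex_of_real (rr j) else 0)"
proof -
  have "(j*Dp+t) div Dp = j" "(j*Dp+t) mod Dp = t" using jd_div[OF assms] jd_mod[OF assms] by auto
  thus ?thesis unfolding phi_def using Dp by simp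
qed

lemma Yp: assumes "j < N" "c < Dp"
  shows "(\<Sum>t<Dp. U' j b $$ (c,t) * phi (j*Dp+t)) = (if c < 2 then al j b c else 0)"
proof -
  have "(\<Sum>t<Dp. U' j b $$ (c,t) * phi (j*Dp+t)) = (\<Sum>t<Dp. if t = 0 then U' j b $$ (c,0) * complex_of_real (rr j) else 0)"
    by (intro sum.cong refl) (auto simp: phi_at)
  also have "\<dots> = U' j b $$ (c,0) * complex_of_real (rr j)" using Dp by simp
  also have "\<dots> = (if c < 2 then al j b c else 0)"
  proof (cases "c < 2")
    case True
    have "U' j b $$ (c,0) = an j b c" unfolding U'_def using True assms Dp
      by (auto simp: G2_def dest!: less2_cases)
    thus ?thesis using True al_zero[OF assms(1)] by (auto simp: an_def)
  next
    case False thus ?thesis unfolding U'_def using assms by auto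
  qed
  finally show ?thesis .
qed

end


context sim begin

lemma Pm_carrier: "Pm a \<in> carrier_mat (N*d) (N*d)"
  using povm unfolding povm2_def psd_mat_def by (cases a) auto

lemma Pm_psd: "psd_mat (N*d) (Pm a)"
  using povm unfolding povm2_def by (cases a) auto

lemma rho_carrier: "rho \<in> carrier_mat (N*d) (N*d)"
  using dens unfolding density_op_def psd_mat_def by auto

lemma src: "ctrace (Pm a * ctrl_unitary N d U x * rho * cadj (ctrl_unitary N d U x))
  = (\<Sum>k<Kd. \<Sum>j<N. \<Sum>s<d. \<Sum>j'<N. \<Sum>s'<d. cnj (Psi j (x j) s k) * Pm a $$ (j*d+s, j'*d+s') * Psi j' (x j') s' k)"
proof -
  have C: "ctrl_unitary N d U x \<in> carrier_mat (N*d) (N*d)" unfolding ctrl_unitary_def by simp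
  have "ctrace (Pm a * ctrl_unitary N d U x * rho * cadj (ctrl_unitary N d U x))
     = (\<Sum>k\<in>{..<Kd}. qf (N*d) (\<lambda>i j. Pm a $$ (i,j)) (\<lambda>r. \<Sum>c<N*d. ctrl_unitary N d U x $$ (r,c) * w k c))"
    by (rule trace_form[OF Pm_carrier C rho_carrier]) (use wfac in \<open>auto simp: Kd_def\<close>)
  also have "\<dots> = (\<Sum>k<Kd. \<Sum>j<N. \<Sum>s<d. \<Sum>j'<N. \<Sum>s'<d. cnj (Psi j (x j) s k) * Pm a $$ (j*d+s, j'*d+s') * Psi j' (x j') s' k)"
    unfolding qf_nd[OF d0] by (intro sum.cong refl) (simp add: ctrl_entry Psi_def)
  finally show ?thesis .
qed

lemma Pi'_carrier: "Pi' a \<in> carrier_mat (N*Dp) (N*Dp)" unfolding Pi'_def by simp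
lemma rho'_carrier: "rho' \<in> carrier_mat (N*Dp) (N*Dp)" unfolding rho'_def by simp

lemma tgt: "ctrace (Pi' a * ctrl_unitary N Dp U' x * rho' * cadj (ctrl_unitary N Dp U' x))
  = (\<Sum>j<N. \<Sum>c<2. \<Sum>j'<N. \<Sum>c'<2. cnj (al j (x j) c) * PiF a j c j' c' * al j' (x j') c')"
proof -
  have C: "ctrl_unitary N Dp U' x \<in> carrier_mat (N*Dp) (N*Dp)" unfolding ctrl_unitary_def by simp
  have "ctrace (Pi' a * ctrl_unitary N Dp U' x * rho' * cadj (ctrl_unitary N Dp U' x))
     = (\<Sum>k\<in>{0::nat}. qf (N*Dp) (\<lambda>i j. Pi' a $$ (i,j)) (\<lambda>r. \<Sum>c<N*Dp. ctrl_unitary N Dp U' x $$ (r,c) * (\<lambda>k. phi) k c))"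
    by (rule trace_form[OF Pi'_carrier C rho'_carrier]) (auto simp: rho'_def)
  also have "\<dots> = qf (N*Dp) (\<lambda>i j. Pi' a $$ (i,j)) (\<lambda>r. \<Sum>c<N*Dp. ctrl_unitary N Dp U' x $$ (r,c) * phi c)" by simp
  also have "\<dots> = (\<Sum>j<N. \<Sum>c<Dp. \<Sum>j'<N. \<Sum>c'<Dp. if c < 2 \<and> c' < 2 then cnj (al j (x j) c) * PiF a j c j' c' * al j' (x j') c' else 0)"
    unfolding qf_nd[OF Dp(2)] by (intro sum.cong refl) (auto simp: ctrl_entry Yp Pi'_def jd_lt)
  also have "\<dots> = (\<Sum>j<N. \<Sum>c<2. \<Sum>j'<N. \<Sum>c'<2. cnj (al j (x j) c) * PiF a j c j' c' * al j' (x j') c')"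
    by (rule restrict_2x[OF Dp(1)])
  finally show ?thesis .
qed

lemma behav: "ctrace (Pm a * ctrl_unitary N d U x * rho * cadj (ctrl_unitary N d U x))
  = ctrace (Pi' a * ctrl_unitary N Dp U' x * rho' * cadj (ctrl_unitary N Dp U' x))"
proof -
  have "ctrace (Pm a * ctrl_unitary N d U x * rho * cadj (ctrl_unitary N d U x))
    = (\<Sum>k\<in>{..<Kd}. \<Sum>j\<in>{..<N}. \<Sum>s\<in>{..<d}. \<Sum>j'\<in>{..<N}. \<Sum>s'\<in>{..<d}. cnj (\<Sum>c\<in>{..<2}. al j (x j) c * E j c s k) * Pm a $$ (j*d+s, j'*d+s') * (\<Sum>c'\<in>{..<2}. al j' (x j') c' * E j' c' s' k))"
    unfolding src by (intro sum.cong refl) (simp add: span)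
  also have "\<dots> = (\<Sum>j<N. \<Sum>c<2. \<Sum>j'<N. \<Sum>c'<2. cnj (al j (x j) c) * PiF a j c j' c' * al j' (x j') c')"
    unfolding PiF_def
    by (rule G[where a = "\<lambda>j c. al j (x j) c" and e = E and M = "\<lambda>j s j' s'. Pm a $$ (j*d+s, j'*d+s')"]) auto
  also have "\<dots> = ctrace (Pi' a * ctrl_unitary N Dp U' x * rho' * cadj (ctrl_unitary N Dp U' x))"
    unfolding tgt ..
  finally show ?thesis .
qed

end


context sim begin

lemma Pi'_psd: "psd_mat (N*Dp) (Pi' a)"
proof (rule psdf_psd[OF Pi'_carrier])
  show "psdf (N*Dp) (\<lambda>i j. Pi' a $$ (i,j))" unfolding psdf_def
  proof
    fix v :: "nat \<Rightarrow> complex"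
    define T where "T p q = (if p mod Dp < 2 \<and> q mod Dp < 2 then PiF a (p div Dp) (p mod Dp) (q div Dp) (q mod Dp) else 0)" for p q
    define Dg where "Dg p q = (if \<not> a \<and> p = q \<and> \<not> p mod Dp < 2 then (1::complex) else 0)" for p q
    have split: "qf (N*Dp) (\<lambda>i j. Pi' a $$ (i,j)) v = qf (N*Dp) T v + qf (N*Dp) Dg v"
      by (subst qf_add[symmetric], rule qf_cong) (auto simp: Pi'_def T_def Dg_def)
    have dg: "Im (qf (N*Dp) Dg v) = 0 \<and> Re (qf (N*Dp) Dg v) \<ge> 0"
      unfolding qf_def
    proof (rule nonneg_sum)
      fix p assume p: "p \<in> {..<N*Dp}"
      have "(\<Sum>q<N*Dp. cnj (v p) * Dg p q * v q) = (\<Sum>q<N*Dp. if q = p then (if \<not> a \<and> \<not> p mod Dp < 2 then cnj (v p) * v p else 0) else 0)"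
        by (intro sum.cong refl) (auto simp: Dg_def)
      also have "\<dots> = (if \<not> a \<and> \<not> p mod Dp < 2 then complex_of_real ((cmod (v p))^2) else 0)"
        using p by (simp add: cnj_mult_self)
      finally show "Im (\<Sum>q<N*Dp. cnj (v p) * Dg p q * v q) = 0 \<and> Re (\<Sum>q<N*Dp. cnj (v p) * Dg p q * v q) \<ge> 0"
        by simp
    qed
    define u where "u j s k = (\<Sum>c\<in>{..<2}. v (j*Dp+c) * E j c s k)" for j s k
    have "qf (N*Dp) T v = (\<Sum>j<N. \<Sum>c<Dp. \<Sum>j'<N. \<Sum>c'<Dp. if c < 2 \<and> c' < 2 then cnj (v (j*Dp+c)) * PiF a j c j' c' * v (j'*Dp+c') else 0)"
      unfolding qf_nd[OF Dp(2)] by (intro sum.cong refl) (auto simp: T_def)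
    also have "\<dots> = (\<Sum>j<N. \<Sum>c<2. \<Sum>j'<N. \<Sum>c'<2. cnj (v (j*Dp+c)) * PiF a j c j' c' * v (j'*Dp+c'))"
      by (rule restrict_2x[OF Dp(1)])
    also have "\<dots> = (\<Sum>k\<in>{..<Kd}. \<Sum>j\<in>{..<N}. \<Sum>s\<in>{..<d}. \<Sum>j'\<in>{..<N}. \<Sum>s'\<in>{..<d}. cnj (\<Sum>c\<in>{..<2}. v (j*Dp+c) * E j c s k) * Pm a $$ (j*d+s, j'*d+s') * (\<Sum>c'\<in>{..<2}. v (j'*Dp+c') * E j' c' s' k))"
      unfolding PiF_def
      by (rule G[where a = "\<lambda>j c. v (j*Dp+c)" and e = E and M = "\<lambda>j s j' s'. Pm a $$ (j*d+s, j'*d+s')", symmetric]) auto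
    also have "\<dots> = (\<Sum>k<Kd. qf (N*d) (\<lambda>i j. Pm a $$ (i,j)) (\<lambda>r. u (r div d) (r mod d) k))"
      unfolding qf_nd[OF d0] u_def by (intro sum.cong refl) auto
    finally have t: "qf (N*Dp) T v = (\<Sum>k<Kd. qf (N*d) (\<lambda>i j. Pm a $$ (i,j)) (\<lambda>r. u (r div d) (r mod d) k))" .
    have tn: "Im (qf (N*Dp) T v) = 0 \<and> Re (qf (N*Dp) T v) \<ge> 0"
      unfolding t by (rule nonneg_sum) (use psd_psdf[OF Pm_psd] in \<open>auto simp: psdf_def\<close>)
    show "Im (qf (N*Dp) (\<lambda>i j. Pi' a $$ (i,j)) v) = 0 \<and> Re (qf (N*Dp) (\<lambda>i j. Pi' a $$ (i,j)) v) \<ge> 0"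
      unfolding split using dg tn by simp
  qed
qed

lemma Pm_sum: assumes "r < N*d" "r' < N*d"
  shows "Pm False $$ (r,r') + Pm True $$ (r,r') = (if r = r' then 1 else 0)"
proof -
  have "(Pm False + Pm True) $$ (r,r') = 1\<^sub>m (N*d) $$ (r,r')" using povm unfolding povm2_def by simp
  thus ?thesis using assms Pm_carrier[of True] by simp
qed

lemma PiF_sum: assumes "j < N" "j' < N" "c < 2" "c' < 2"
  shows "PiF False j c j' c' + PiF True j c j' c' = (if j = j' \<and> c = c' then 1 else 0)"
proof -
  have "PiF False j c j' c' + PiF True j c j' c' = (\<Sum>k<Kd. \<Sum>s<d. \<Sum>s'<d. cnj (E j c s k) * (Pm False $$ (j*d+s, j'*d+s') + Pm True $$ (j*d+s, j'*d+s')) * E j' c' s' k)"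
    unfolding PiF_def by (simp add: distrib_left distrib_right sum.distrib)
  also have "\<dots> = (\<Sum>k<Kd. \<Sum>s<d. \<Sum>s'<d. if s' = s then (if j = j' then cnj (E j c s k) * E j c' s k else 0) else 0)"
    by (intro sum.cong refl) (use assms in \<open>auto simp: Pm_sum jd_lt jds_eq\<close>)
  also have "\<dots> = (if j = j' then ipQ (E j c) (E j c') else 0)"
    unfolding ipQ_def by auto
  also have "\<dots> = (if j = j' \<and> c = c' then 1 else 0)" using E_orth assms by auto
  finally show ?thesis .
qed

lemma divmod_eq: "(0::nat) < D \<Longrightarrow> p = q \<longleftrightarrow> p div D = q div D \<and> p mod D = q mod D"
  by (metis div_mult_mod_eq)

lemma Pi'_povm: "povm2 (N*Dp) Pi'"
  unfolding povm2_def
proof (intro conjI Pi'_psd)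
  show "Pi' False + Pi' True = 1\<^sub>m (N*Dp)"
  proof (rule eq_matI)
    fix p q assume "p < dim_row (1\<^sub>m (N*Dp))" "q < dim_col (1\<^sub>m (N*Dp))"
    hence pq: "p < N*Dp" "q < N*Dp" by auto
    have jj: "p div Dp < N" "q div Dp < N" using pq by (auto simp: less_mult_imp_div_less)
    have "(Pi' False + Pi' True) $$ (p,q) = Pi' False $$ (p,q) + Pi' True $$ (p,q)"
      using pq Pi'_carrier[of True] by simp
    also have "\<dots> = (if p = q then 1 else 0)"
    proof (cases "p mod Dp < 2 \<and> q mod Dp < 2")
      case True
      have "Pi' False $$ (p,q) + Pi' True $$ (p,q) = PiF False (p div Dp) (p mod Dp) (q div Dp) (q mod Dp) + PiF True (p div Dp) (p mod Dp) (q div Dp) (q mod Dp)"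
        using pq True by (simp add: Pi'_def)
      also have "\<dots> = (if p = q then 1 else 0)"
        using PiF_sum[OF jj] True divmod_eq[OF Dp(2), of p q] by simp
      finally show ?thesis .
    next
      case False thus ?thesis using pq by (auto simp: Pi'_def)
    qed
    finally show "(Pi' False + Pi' True) $$ (p,q) = 1\<^sub>m (N*Dp) $$ (p,q)" using pq by simp
  qed (auto simp: Pi'_def)
qed

lemma rho'_dens: "density_op (N*Dp) rho'"
  unfolding density_op_def
proof
  show "psd_mat (N*Dp) rho'"
  proof (rule psdf_psd[OF rho'_carrier])
    show "psdf (N*Dp) (\<lambda>i j. rho' $$ (i,j))" unfolding psdf_def
    proof
      fix v
      have "qf (N*Dp) (\<lambda>i j. rho' $$ (i,j)) v = qf (N*Dp) (\<lambda>i j. phi i * cnj (phi j)) v"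
        by (rule qf_cong) (simp add: rho'_def)
      also have "\<dots> = complex_of_real ((cmod (\<Sum>i<N*Dp. cnj (v i) * phi i))^2)"
        unfolding qf_rank1 by (rule complex_norm_square[symmetric])
      finally show "Im (qf (N*Dp) (\<lambda>i j. rho' $$ (i,j)) v) = 0 \<and> Re (qf (N*Dp) (\<lambda>i j. rho' $$ (i,j)) v) \<ge> 0"
        by simp
    qed
  qed
  have "ctrace rho' = (\<Sum>p<N*Dp. phi p * cnj (phi p))" unfolding ctrace_def rho'_def by simp
  also have "\<dots> = (\<Sum>j<N. \<Sum>c<Dp. phi (j*Dp+c) * cnj (phi (j*Dp+c)))" by (rule sum_nd[OF Dp(2)])
  also have "\<dots> = (\<Sum>j<N. \<Sum>c<Dp. if c = 0 then complex_of_real (rr j * rr j) else 0)"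
    by (intro sum.cong refl) (auto simp: phi_at)
  also have "\<dots> = (\<Sum>j<N. complex_of_real (rr j * rr j))" using Dp by simp
  also have "\<dots> = (\<Sum>j<N. ipQ (Psi j False) (Psi j False))" by (simp only: rr_sq)
  also have "\<dots> = (\<Sum>j<N. \<Sum>k<Kd. \<Sum>t<d. cnj (w k (j*d+t)) * w k (j*d+t))"
    by (intro sum.cong refl) (simp add: ipQ_Psi)
  also have "\<dots> = (\<Sum>k<Kd. \<Sum>j<N. \<Sum>t<d. cnj (w k (j*d+t)) * w k (j*d+t))" by (rule sum.swap)
  also have "\<dots> = (\<Sum>k<Kd. \<Sum>r<N*d. cnj (w k r) * w k r)" by (simp add: sum_nd[OF d0])
  also have "\<dots> = (\<Sum>r<N*d. \<Sum>k<Kd. w k r * cnj (w k r))" by (subst sum.swap) (simp add: mult.commute)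
  also have "\<dots> = (\<Sum>r<N*d. rho $$ (r,r))" using wfac by (simp add: Kd_def)
  also have "\<dots> = ctrace rho" unfolding ctrace_def using rho_carrier by simp
  also have "\<dots> = 1" using dens unfolding density_op_def by simp
  finally show "ctrace rho' = 1" .
qed

lemma main: assumes "\<forall>a x. P a x = ctrace (Pm a * ctrl_unitary N d U x * rho * cadj (ctrl_unitary N d U x))"
  shows "P \<in> Q_set N (N+1)"
  unfolding Q_set_def Dp_def[symmetric] mem_Collect_eq
proof (intro exI conjI allI impI)
  show "density_op (N*Dp) rho'" by (rule rho'_dens)
  show "povm2 (N*Dp) Pi'" by (rule Pi'_povm)
  show "unitary_mat Dp (U' j b)" if "j < N" for j b using U'_unit[OF that] .
  show "P a x = ctrace (Pi' a * ctrl_unitary N Dp U' x * rho' * cadj (ctrl_unitary N Dp U' x))" for a x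
    using assms behav by simp
qed

end

theorem lemma3:
  fixes N d :: nat
  assumes "N \<ge> 1" and "d \<ge> 1"
  shows "Q_set N d \<subseteq> Q_set N (N + 1)"
proof
  fix P assume "P \<in> Q_set N d"
  then obtain rho U Pm where dens: "density_op (N*d) rho" and unit: "\<forall>j<N. \<forall>b. unitary_mat d (U j b)"
    and povm: "povm2 (N*d) Pm"
    and P: "\<forall>a x. P a x = ctrace (Pm a * ctrl_unitary N d U x * rho * cadj (ctrl_unitary N d U x))"
    unfolding Q_set_def by blast
  have "psdf (N*d) (\<lambda>i j. rho $$ (i,j))" using dens unfolding density_op_def by (auto intro: psd_psdf)
  then obtain w0 where w0: "\<forall>i<N*d. \<forall>j<N*d. rho $$ (i,j) = (\<Sum>k<N*d. w0 k i * cnj (w0 k j))"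
    using chol by blast
  define w where "w k i = (if k < N*d then w0 k i else 0)" for k i
  have wfac: "\<forall>i<N*d. \<forall>j<N*d. rho $$ (i,j) = (\<Sum>k<N*d+2. w k i * cnj (w k j))"
    using w0 by (simp add: w_def)
  have wz: "\<forall>k i. N*d \<le> k \<longrightarrow> w k i = 0" by (simp add: w_def)
  interpret sim N d rho U Pm w
    by unfold_locales (use assms dens unit povm wfac wz in auto)
  show "P \<in> Q_set N (N+1)" by (rule main[OF P])
qed


end
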